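(* Let $G=(V,E)$ be a finite connected graph and $A$ an irreducible, lazy transition matrix on $V$, with $E_A=\{(i,j)\in V\times V:A(i,j)>0\}$. Let $i\in V$. Then there exist a finite integer $s(i)$ and a sequence $(i=i_1,i_2,\dots,i_{s(i)})\in V^{s(i)}$ with $(i_j,i_{j+1})\in E_A$ for all $j$, such that the configuration $$x^{(i)}:=T_{i_{s(i)}}\cdots T_{i_1}(T_i)^{s(i)}x$$ is the same for every initial configuration $x\in S^{(i)}$, and satisfies $\min_{j\in V}x^{(i)}_j\ge-2s(i)$.
   Context: $S=(-\mathbb{N}_0)^V$ is the space of height profiles seen from the maximum, and $S^{(i)}=\{x\in S:x_i=0\}$. For $x\in S$ and $i\in V$, $T_ix\in S$ is obtained by first setting $x'_i=\max\{x_k:\operatorname{dist}(k,i)\le1\}+1$, $x'_j=x_j$ for $j\ne i$ (dist the graph distance in $G$), and then $(T_ix)_j=x'_j-\max_kx'_k$. Irreducible: for all $v\neq v'$ there is $s$ with $A^s(v,v')>0$; lazy: $A(v,v)>0$ for all $v$. *)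

theory Defs
  imports Complex_Main
begin

definition simple_graph :: "('v \<Rightarrow> 'v \<Rightarrow> bool) \<Rightarrow> bool" where
  "simple_graph E \<longleftrightarrow> (\<forall>u v. E u v \<longrightarrow> E v u) \<and> (\<forall>v. \<not> E v v)"

definition connected_graph :: "('v \<Rightarrow> 'v \<Rightarrow> bool) \<Rightarrow> bool" where
  "connected_graph E \<longleftrightarrow> (\<forall>u v. (u, v) \<in> {(a, b). E a b}\<^sup>*)"

definition transition_matrix :: "('v::finite \<Rightarrow> 'v \<Rightarrow> real) \<Rightarrow> bool" where
  "transition_matrix A \<longleftrightarrow> (\<forall>u v. A u v \<ge> 0) \<and> (\<forall>u. (\<Sum>v\<in>UNIV. A u v) = 1)"

fun matpow :: "('v::finite \<Rightarrow> 'v \<Rightarrow> real) \<Rightarrow> nat \<Rightarrow> 'v \<Rightarrow> 'v \<Rightarrow> real" where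
  "matpow A 0 = (\<lambda>u v. if u = v then 1 else 0)"
| "matpow A (Suc n) = (\<lambda>u v. \<Sum>k\<in>UNIV. matpow A n u k * A k v)"

definition irreducible_matrix :: "('v::finite \<Rightarrow> 'v \<Rightarrow> real) \<Rightarrow> bool" where
  "irreducible_matrix A \<longleftrightarrow> (\<forall>v v'. v \<noteq> v' \<longrightarrow> (\<exists>s. matpow A s v v' > 0))"

definition lazy_matrix :: "('v \<Rightarrow> 'v \<Rightarrow> real) \<Rightarrow> bool" where
  "lazy_matrix A \<longleftrightarrow> (\<forall>v. A v v > 0)"

text \<open>Height profiles seen from the maximum: S = (-N_0)^V, and S^(i).\<close>

definition Sconf :: "('v \<Rightarrow> int) set" where
  "Sconf = {x. \<forall>j. x j \<le> 0}"

definition Sconf_at :: "'v \<Rightarrow> ('v \<Rightarrow> int) set" where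
  "Sconf_at i = {x \<in> Sconf. x i = 0}"

definition Tmap :: "('v::finite \<Rightarrow> 'v \<Rightarrow> bool) \<Rightarrow> 'v \<Rightarrow> ('v \<Rightarrow> int) \<Rightarrow> ('v \<Rightarrow> int)" where
  "Tmap E i x =
     (let x' = x(i := Max {x k | k. k = i \<or> E k i} + 1)
      in (\<lambda>j. x' j - Max (range x')))"

end

theory Submission
  imports Defs
begin

definition Uup :: "('v::finite \<Rightarrow> 'v \<Rightarrow> bool) \<Rightarrow> 'v \<Rightarrow> ('v \<Rightarrow> int) \<Rightarrow> ('v \<Rightarrow> int)" where
  "Uup E v z = z(v := Max (z ` {k. k = v \<or> E k v}) + 1)"

definition nrm :: "('v::finite \<Rightarrow> int) \<Rightarrow> ('v \<Rightarrow> int)" where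
  "nrm z = (\<lambda>j. z j - Max (range z))"

definition gstep :: "('v \<Rightarrow> 'v \<Rightarrow> bool) \<Rightarrow> 'v \<Rightarrow> 'v set \<Rightarrow> 'v set" where
  "gstep E v G = (if \<exists>u\<in>G. u = v \<or> E u v then insert v G else G)"

lemma nbhd_eq: "{z k | k. k = v \<or> E k v} = z ` {k. k = v \<or> E k v}"
  by blast

lemma Tmap_eq: "Tmap E v z = nrm (Uup E v z)"
  by (simp add: Tmap_def Uup_def nrm_def Let_def nbhd_eq)

lemma Max_shift: "finite S \<Longrightarrow> S \<noteq> {} \<Longrightarrow> Max ((\<lambda>j. z j + (c::int)) ` S) = Max (z ` S) + c"
  by (rule Max_add_commute)

lemma U_shift: "Uup E v (\<lambda>j. z j + c) = (\<lambda>j. Uup E v z j + (c::int))"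
proof -
  have "Max ((\<lambda>j. z j + c) ` {k. k = v \<or> E k v}) = Max (z ` {k. k = v \<or> E k v}) + c"
    by (rule Max_shift) auto
  then show ?thesis by (auto simp: Uup_def)
qed

lemma nrm_shift: "nrm (\<lambda>j. (z::'v::finite\<Rightarrow>int) j + c) = nrm z"
proof -
  have "Max (range (\<lambda>j. z j + c)) = Max (range z) + c"
    by (rule Max_shift) auto
  then show ?thesis by (simp add: nrm_def)
qed

lemma Tmap_nrm: "Tmap E v (nrm z) = nrm (Uup E v z)"
proof -
  have "nrm z = (\<lambda>j. z j + (- Max (range z)))" unfolding nrm_def by (simp only: diff_conv_add_uminus)
  then have "Tmap E v (nrm z) = nrm (Uup E v (\<lambda>j. z j + (- Max (range z))))"
    by (simp add: Tmap_eq)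
  also have "\<dots> = nrm (Uup E v z)" by (simp add: U_shift nrm_shift)
  finally show ?thesis .
qed

lemma fold_Tmap: "fold (Tmap E) vs (nrm z) = nrm (fold (Uup E) vs z)"
  by (induction vs arbitrary: z) (simp_all add: Tmap_nrm)

lemma nrm_id: "x \<in> Sconf_at i \<Longrightarrow> nrm x = x"
proof -
  assume x: "x \<in> Sconf_at i"
  have "Max (range x) = 0"
    using x by (intro Max_eqI) (auto simp: Sconf_at_def Sconf_def)
  then show ?thesis by (simp add: nrm_def)
qed

lemma U_pow: "x \<in> Sconf_at i \<Longrightarrow> (Uup E i ^^ n) x = x(i := int n)"
proof (induction n)
  case 0
  then show ?case by (auto simp: Sconf_at_def)
next
  case (Suc n)
  have "Max ((x(i := int n)) ` {k. k = i \<or> E k i}) = int n"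
    using Suc.prems by (intro Max_eqI) (auto simp: Sconf_at_def Sconf_def intro: order_trans[of _ 0])
  have "(Uup E i ^^ Suc n) x = Uup E i (x(i := int n))" by (simp only: funpow.simps comp_apply Suc.IH[OF Suc.prems])
  also have "\<dots> = x(i := int (Suc n))" unfolding Uup_def using \<open>Max _ = _\<close> by (simp add: ac_simps)
  finally show ?case .
qed

lemma step_inv:
  fixes z z' :: "'v::finite \<Rightarrow> int" and S k :: int
  assumes a1: "\<forall>j\<in>G. z j = z' j" and a2: "\<forall>j\<in>G. z j \<ge> S"
    and a3: "\<forall>j. j \<notin> G \<longrightarrow> z j \<le> k \<and> z' j \<le> k"
    and a4: "\<forall>j. z j \<le> S + k" and a5: "k < S"
  shows "(\<forall>j\<in>gstep E v G. Uup E v z j = Uup E v z' j) \<and> (\<forall>j\<in>gstep E v G. Uup E v z j \<ge> S)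
    \<and> (\<forall>j. j \<notin> gstep E v G \<longrightarrow> Uup E v z j \<le> k + 1 \<and> Uup E v z' j \<le> k + 1)
    \<and> (\<forall>j. Uup E v z j \<le> S + (k + 1))"
proof -
  define N where "N = {k. k = v \<or> E k v}"
  have fN: "finite N" and vN: "v \<in> N" by (auto simp: N_def)
  define M where "M = Max (z ` N)"
  define M' where "M' = Max (z' ` N)"
  have "M \<in> z ` N" unfolding M_def using fN vN by (intro Max_in) auto
  then obtain a where aN: "a \<in> N" and Ma: "M = z a" by auto
  have "M' \<in> z' ` N" unfolding M'_def using fN vN by (intro Max_in) auto
  then obtain a' where aN': "a' \<in> N" and Ma': "M' = z' a'" by auto
  have geM: "\<And>b. b \<in> N \<Longrightarrow> z b \<le> M" unfolding M_def using fN by auto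
  have geM': "\<And>b. b \<in> N \<Longrightarrow> z' b \<le> M'" unfolding M'_def using fN by auto
  have Uz: "Uup E v z = z(v := M + 1)" by (simp add: Uup_def M_def N_def)
  have Uz': "Uup E v z' = z'(v := M' + 1)" by (simp add: Uup_def M'_def N_def)
  have Mb: "M \<le> S + k" using Ma a4 by simp
  have a4': "\<forall>j. z j \<le> S + (k + 1)"
  proof
    fix j have "z j \<le> S + k" using a4 by blast
    then show "z j \<le> S + (k + 1)" by linarith
  qed
  show ?thesis
  proof (cases "\<exists>u\<in>G. u = v \<or> E u v")
    case True
    then obtain u where uG: "u \<in> G" and uN: "u \<in> N" by (auto simp: N_def)
    have g: "gstep E v G = insert v G" using True by (simp add: gstep_def)
    have "M \<ge> S" using geM[OF uN] a2 uG by force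
    then have "a \<in> G" using a3 a5 Ma by force
    then have "M \<le> M'" using Ma a1 geM'[OF aN] by force
    have "M' \<ge> S" using geM'[OF uN] a2 a1 uG by force
    then have "a' \<in> G" using a3 a5 Ma' by force
    then have "M' \<le> M" using Ma' a1 geM[OF aN'] by force
    have "M = M'" using \<open>M \<le> M'\<close> \<open>M' \<le> M\<close> by simp
    show ?thesis unfolding g Uz Uz' using \<open>M = M'\<close> \<open>M \<ge> S\<close> a1 a2 a3 a4' Mb by auto
  next
    case False
    have g: "gstep E v G = G" using False by (simp add: gstep_def)
    have vG: "v \<notin> G" using False by auto
    have "a \<notin> G" using False aN by (auto simp: N_def)
    then have "M \<le> k" using a3 Ma by auto
    have "a' \<notin> G" using False aN' by (auto simp: N_def)
    then have "M' \<le> k" using a3 Ma' by auto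
    show ?thesis unfolding g Uz Uz' using vG \<open>M \<le> k\<close> \<open>M' \<le> k\<close> a1 a2 a3 a4' Mb by auto
  qed
qed

lemma fold_inv:
  fixes z z' :: "'v::finite \<Rightarrow> int" and S k :: int
  assumes "\<forall>j\<in>G. z j = z' j" and "\<forall>j\<in>G. z j \<ge> S"
    and "\<forall>j. j \<notin> G \<longrightarrow> z j \<le> k \<and> z' j \<le> k"
    and "\<forall>j. z j \<le> S + k" and "k + int (length vs) \<le> S"
  shows "(\<forall>j\<in>fold (gstep E) vs G. fold (Uup E) vs z j = fold (Uup E) vs z' j)
    \<and> (\<forall>j\<in>fold (gstep E) vs G. fold (Uup E) vs z j \<ge> S)
    \<and> (\<forall>j. fold (Uup E) vs z j \<le> S + (k + int (length vs)))"
  using assms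
proof (induction vs arbitrary: G z z' k)
  case Nil
  then show ?case by simp
next
  case (Cons v vs)
  have "k < S" using Cons.prems(5) by simp
  from step_inv[OF Cons.prems(1-4) this, of E v]
  have st: "(\<forall>j\<in>gstep E v G. Uup E v z j = Uup E v z' j) \<and> (\<forall>j\<in>gstep E v G. Uup E v z j \<ge> S)
    \<and> (\<forall>j. j \<notin> gstep E v G \<longrightarrow> Uup E v z j \<le> k + 1 \<and> Uup E v z' j \<le> k + 1)
    \<and> (\<forall>j. Uup E v z j \<le> S + (k + 1))" .
  have "k + 1 + int (length vs) \<le> S" using Cons.prems(5) by simp
  from st have s1: "\<forall>j\<in>gstep E v G. Uup E v z j = Uup E v z' j"
    and s2: "\<forall>j\<in>gstep E v G. Uup E v z j \<ge> S"
    and s3: "\<forall>j. j \<notin> gstep E v G \<longrightarrow> Uup E v z j \<le> k + 1 \<and> Uup E v z' j \<le> k + 1"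
    and s4: "\<forall>j. Uup E v z j \<le> S + (k + 1)" by blast+
  from Cons.IH[OF s1 s2 s3 s4 \<open>k + 1 + int (length vs) \<le> S\<close>]
  have h1: "\<forall>j\<in>fold (gstep E) vs (gstep E v G). fold (Uup E) vs (Uup E v z) j = fold (Uup E) vs (Uup E v z') j"
    and h2: "\<forall>j\<in>fold (gstep E) vs (gstep E v G). S \<le> fold (Uup E) vs (Uup E v z) j"
    and h3: "\<forall>j. fold (Uup E) vs (Uup E v z) j \<le> S + (k + 1 + int (length vs))" by blast+
  have h3': "\<forall>j. fold (Uup E) vs (Uup E v z) j \<le> S + (k + int (length (v # vs)))"
    using h3 by (simp add: algebra_simps)
  show ?case using h1 h2 h3' by (simp only: fold_simps) (intro conjI; blast)
qed

lemma gstep_mono: "G \<subseteq> gstep E v G"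
  by (auto simp: gstep_def)

lemma fold_gstep_mono: "G \<subseteq> fold (gstep E) vs G"
  by (induction vs arbitrary: G) (simp, metis fold_simps(2) gstep_mono order_trans)

lemma gstep_mono2: "G \<subseteq> H \<Longrightarrow> gstep E v G \<subseteq> gstep E v H"
  by (auto simp: gstep_def)

lemma fold_gstep_mono2: "G \<subseteq> H \<Longrightarrow> fold (gstep E) vs G \<subseteq> fold (gstep E) vs H"
  by (induction vs arbitrary: G H) (auto intro: gstep_mono2)

lemma matpow_nonneg: "transition_matrix A \<Longrightarrow> matpow A n u v \<ge> 0"
  by (induction n arbitrary: v) (auto simp: transition_matrix_def intro!: sum_nonneg)

lemma matpow_path:
  assumes "transition_matrix A"
  shows "matpow A n u v > 0 \<Longrightarrow> (u, v) \<in> {(a, b). A a b > 0}\<^sup>*"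
proof (induction n arbitrary: v)
  case 0
  then show ?case by (auto split: if_splits)
next
  case (Suc n)
  have "\<exists>k. matpow A n u k * A k v > 0"
  proof (rule ccontr)
    assume "\<not> ?thesis"
    then have "(\<Sum>k\<in>UNIV. matpow A n u k * A k v) \<le> 0" by (intro sum_nonpos) (auto simp: not_less)
    then show False using Suc.prems by simp
  qed
  then obtain k where k: "matpow A n u k * A k v > 0" by blast
  have "matpow A n u k \<ge> 0" "A k v \<ge> 0" using matpow_nonneg[OF assms] assms
    by (auto simp: transition_matrix_def)
  then have "matpow A n u k > 0" "A k v > 0" using k
    by (auto simp: zero_less_mult_iff)
  then show ?case using Suc.IH by (auto intro: rtrancl_into_rtrancl)
qed

lemma path_list:
  assumes "(c, w) \<in> {(a, b). A a b > 0}\<^sup>*" and lz: "lazy_matrix A"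
  shows "\<exists>p. p \<noteq> [] \<and> last p = w \<and> 0 < A c (hd p) \<and> successively (\<lambda>a b. 0 < A a b) p"
  using assms(1)
proof (induction rule: rtrancl_induct)
  case base
  then show ?case using lz by (intro exI[of _ "[c]"]) (auto simp: lazy_matrix_def)
next
  case (step y z)
  then obtain p where p: "p \<noteq> []" "last p = y" "0 < A c (hd p)" "successively (\<lambda>a b. 0 < A a b) p"
    by blast
  show ?case using p step.hyps(2)
    by (intro exI[of _ "p @ [z]"]) (auto simp: successively_append_iff)
qed

lemma cross:
  assumes "(a, b) \<in> r\<^sup>*" "a \<in> G" "b \<notin> G"
  shows "\<exists>u v. (u, v) \<in> r \<and> u \<in> G \<and> v \<notin> G"
  using assms
proof (induction rule: rtrancl_induct)
  case base
  then show ?case by simp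
next
  case (step y z)
  then show ?case by (cases "y \<in> G") auto
qed

lemma construct:
  fixes E :: "'v::finite \<Rightarrow> 'v \<Rightarrow> bool"
  assumes sg: "simple_graph E" and cg: "connected_graph E"
    and tm: "transition_matrix A" and ir: "irreducible_matrix A" and lz: "lazy_matrix A"
  shows "\<forall>ws. ws \<noteq> [] \<and> hd ws = i \<and> successively (\<lambda>a b. 0 < A a b) ws
     \<and> card (- fold (gstep E) ws {i}) \<le> n \<longrightarrow>
     (\<exists>ws'. ws' \<noteq> [] \<and> hd ws' = i \<and> successively (\<lambda>a b. 0 < A a b) ws' \<and> fold (gstep E) ws' {i} = UNIV)"
proof (induction n)
  case 0
  then show ?case by auto
next
  case (Suc n)
  show ?case
  proof (intro allI impI)
    fix ws assume H: "ws \<noteq> [] \<and> hd ws = i \<and> successively (\<lambda>a b. 0 < A a b) ws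
     \<and> card (- fold (gstep E) ws {i}) \<le> Suc n"
    define G where "G = fold (gstep E) ws {i}"
    show "\<exists>ws'. ws' \<noteq> [] \<and> hd ws' = i \<and> successively (\<lambda>a b. 0 < A a b) ws' \<and> fold (gstep E) ws' {i} = UNIV"
    proof (cases "G = UNIV")
      case True
      then show ?thesis using H G_def by blast
    next
      case False
      then obtain w where wG: "w \<notin> G" by auto
      have iG: "i \<in> G" using fold_gstep_mono[of "{i}" E ws] G_def by auto
      have "(i, w) \<in> {(a, b). E a b}\<^sup>*" using cg by (simp add: connected_graph_def)
      from cross[OF this iG wG] obtain u w' where uw: "E u w'" "u \<in> G" "w' \<notin> G" by auto
      have all: "\<forall>v v'. (v, v') \<in> {(a, b). A a b > 0}\<^sup>*"
      proof (intro allI)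
        fix v v' :: 'v
        show "(v, v') \<in> {(a, b). A a b > 0}\<^sup>*"
        proof (cases "v = v'")
          case True then show ?thesis by simp
        next
          case False
          then obtain s where "matpow A s v v' > 0" using ir by (auto simp: irreducible_matrix_def)
          then show ?thesis using matpow_path[OF tm] by blast
        qed
      qed
      from path_list[OF all[rule_format, of "last ws" w'] lz] obtain p where
        p: "p \<noteq> []" "last p = w'" "0 < A (last ws) (hd p)" "successively (\<lambda>a b. 0 < A a b) p"
        by blast
      define ws2 where "ws2 = ws @ p"
      have F: "fold (gstep E) ws2 {i} = fold (gstep E) p G" by (simp add: ws2_def G_def)
      have pe: "p = butlast p @ [w']" using p by (metis append_butlast_last_id)
      have "G \<subseteq> fold (gstep E) (butlast p) G" by (rule fold_gstep_mono)
      then have "w' \<in> gstep E w' (fold (gstep E) (butlast p) G)" using uw by (auto simp: gstep_def)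
      then have "w' \<in> fold (gstep E) p G" using pe by (metis fold_append fold_simps comp_apply)
      moreover have "G \<subseteq> fold (gstep E) p G" by (rule fold_gstep_mono)
      ultimately have "- fold (gstep E) ws2 {i} \<subset> - G" using F uw by auto
      then have "card (- fold (gstep E) ws2 {i}) < card (- G)" by (intro psubset_card_mono) auto
      then have c: "card (- fold (gstep E) ws2 {i}) \<le> n" using H G_def by simp
      have "ws2 \<noteq> [] \<and> hd ws2 = i \<and> successively (\<lambda>a b. 0 < A a b) ws2"
        using H p by (auto simp: ws2_def successively_append_iff)
      then show ?thesis using Suc.IH c by blast
    qed
  qed
qed

theorem mainTheorem8:
  fixes E :: "'v::finite \<Rightarrow> 'v \<Rightarrow> bool"
    and A :: "'v \<Rightarrow> 'v \<Rightarrow> real"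
    and i :: 'v
  assumes "simple_graph E" and "connected_graph E"
    and "transition_matrix A" and "irreducible_matrix A" and "lazy_matrix A"
  shows "\<exists>s::nat. \<exists>is::'v list. s \<ge> 1 \<and> length is = s \<and> is ! 0 = i
           \<and> (\<forall>j. Suc j < s \<longrightarrow> A (is ! j) (is ! Suc j) > 0)
           \<and> (\<exists>c::'v \<Rightarrow> int.
                (\<forall>x \<in> Sconf_at i. fold (Tmap E) is ((Tmap E i ^^ s) x) = c)
                \<and> (\<forall>j. c j \<ge> - 2 * int s))"
proof -
  have "card (- fold (gstep E) [i] {i}) \<le> card (UNIV :: 'v set)"
    by (intro card_mono) auto
  then have "\<exists>ws'. ws' \<noteq> [] \<and> hd ws' = i \<and> successively (\<lambda>a b. 0 < A a b) ws' \<and> fold (gstep E) ws' {i} = UNIV"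
    using construct[OF assms, of i "card (UNIV :: 'v set)", rule_format, of "[i]"] by simp
  then obtain ws where ws: "ws \<noteq> []" "hd ws = i" "successively (\<lambda>a b. 0 < A a b) ws"
    "fold (gstep E) ws {i} = UNIV" by auto
  define s where "s = length ws"
  define x0 :: "'v \<Rightarrow> int" where "x0 = (\<lambda>_. 0)"
  define w0 where "w0 = fold (Uup E) ws (x0(i := int s))"
  have key: "\<And>x. x \<in> Sconf_at i \<Longrightarrow> fold (Uup E) ws (x(i := int s)) = w0
      \<and> (\<forall>j. w0 j \<ge> int s) \<and> (\<forall>j. w0 j \<le> int s + int s)"
  proof -
    fix x assume x: "x \<in> Sconf_at i"
    have xs: "\<forall>j. x j \<le> 0" using x by (auto simp: Sconf_at_def Sconf_def)
    have I1: "(\<forall>j\<in>fold (gstep E) ws {i}. fold (Uup E) ws (x0(i := int s)) j = fold (Uup E) ws (x(i := int s)) j)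
    \<and> (\<forall>j\<in>fold (gstep E) ws {i}. fold (Uup E) ws (x0(i := int s)) j \<ge> int s)
    \<and> (\<forall>j. fold (Uup E) ws (x0(i := int s)) j \<le> int s + (0 + int (length ws)))"
      by (rule fold_inv) (auto simp: x0_def xs s_def)
    then show "fold (Uup E) ws (x(i := int s)) = w0
      \<and> (\<forall>j. w0 j \<ge> int s) \<and> (\<forall>j. w0 j \<le> int s + int s)"
      using ws(4) by (auto simp: w0_def s_def)
  qed
  have x0S: "x0 \<in> Sconf_at i" by (simp add: x0_def Sconf_at_def Sconf_def)
  define c where "c = nrm w0"
  have eq: "\<forall>x \<in> Sconf_at i. fold (Tmap E) ws ((Tmap E i ^^ s) x) = c"
  proof
    fix x assume x: "x \<in> Sconf_at i"
    have "(Tmap E i ^^ s) x = fold (Tmap E) (replicate s i) (nrm x)"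
      using nrm_id[OF x] by simp
    also have "\<dots> = nrm ((Uup E i ^^ s) x)" by (simp add: fold_Tmap del: fold_replicate) (simp)
    also have "\<dots> = nrm (x(i := int s))" using U_pow[OF x] by simp
    finally have "fold (Tmap E) ws ((Tmap E i ^^ s) x) = nrm (fold (Uup E) ws (x(i := int s)))"
      by (simp add: fold_Tmap)
    then show "fold (Tmap E) ws ((Tmap E i ^^ s) x) = c" using key[OF x] c_def by simp
  qed
  have kb: "(\<forall>j. w0 j \<ge> int s) \<and> (\<forall>j. w0 j \<le> int s + int s)" using key[OF x0S] by simp
  have "Max (range w0) \<le> int s + int s" using kb by (subst Max_le_iff) auto
  note mx = this
  have bnd: "\<forall>j. c j \<ge> - 2 * int s"
  proof
    fix j
    have "w0 j \<ge> int s" using kb by blast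
    then show "c j \<ge> - 2 * int s" unfolding c_def nrm_def using mx by linarith
  qed
  have nth: "\<forall>j. Suc j < s \<longrightarrow> A (ws ! j) (ws ! Suc j) > 0"
    using ws(3) successively_nth[of "\<lambda>a b. 0 < A a b" ws] by (auto simp: s_def)
  have s1: "s \<ge> 1" using ws(1) by (simp add: s_def Suc_le_eq)
  have "ws ! 0 = i" using ws(1,2) by (simp add: hd_conv_nth)
  then show ?thesis using s1 nth eq bnd by (intro exI[of _ s] exI[of _ ws]) (auto simp: s_def)
qed

end
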